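(* Let $N$ be a finite set, $C\subseteq N$ with $|C|\ge 2$ and $k\in\{1,\ldots,|C|-1\}$. Define $\tau\in\mathbb{R}^{\mathcal{S}}$ by $\tau(S)=(-1)^{|S|-k-1}\binom{|S|-2}{|S|-k-1}$ if $S\subseteq C$ and $|S|\ge k+1$, and $\tau(S)=0$ otherwise. Then for every $\eta\in\mathbb{R}^{\Upsilon}$, $$\sum_{S\in\mathcal{S}}\tau(S)\,c_\eta(S)=\sum_{a\in C}\ \sum_{B\subseteq N\setminus\{a\}:\,|B\cap C|\ge k}\eta(a|B),$$ so that the $k$-cluster inequality $\sum_{a\in C}\sum_{B\subseteq N\setminus\{a\}:|B\cap C|\ge k}\eta(a|B)\le|C|-k$ takes, in the characteristic-imset mode, the form $\sum_{S\in\mathcal{S}}\tau(S)c(S)\le |C|-k$.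
   Context: $\Upsilon=\{(a|B): a\in N,\ \emptyset\neq B\subseteq N\setminus\{a\}\}$; $\mathcal{S}=\{S\subseteq N:|S|\ge2\}$; for $\eta\in\mathbb{R}^{\Upsilon}$, $c_\eta\in\mathbb{R}^{\mathcal{S}}$ is defined by $c_\eta(S)=\sum_{a\in S}\sum_{B:\,S\setminus\{a\}\subseteq B\subseteq N\setminus\{a\}}\eta(a|B)$. *)

theory Defs
  imports Complex_Main
begin

text \<open>An element eta of R^Upsilon, Upsilon = {(a|B): a in N, B nonempty, B subset N - {a}},
  is represented as a total function of two arguments; only its values on Upsilon are used
  below (c_eta only uses B containing S - {a}, nonempty as card S >= 2).\<close>

definition calS :: "'a set \<Rightarrow> 'a set set" where
  "calS N = {S. S \<subseteq> N \<and> card S \<ge> 2}"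

definition c_eta :: "'a set \<Rightarrow> ('a \<Rightarrow> 'a set \<Rightarrow> real) \<Rightarrow> 'a set \<Rightarrow> real" where
  "c_eta N \<eta> S = (\<Sum>a\<in>S. \<Sum>B\<in>{B. S - {a} \<subseteq> B \<and> B \<subseteq> N - {a}}. \<eta> a B)"

definition tau :: "'a set \<Rightarrow> nat \<Rightarrow> 'a set \<Rightarrow> real" where
  "tau C k S = (if S \<subseteq> C \<and> card S \<ge> k + 1
     then (-1) ^ (card S - k - 1) * real ((card S - 2) choose (card S - k - 1))
     else 0)"

end

theory Submission imports Defs begin

lemma H_lem:
  "(\<Sum>t\<le>m. real (m choose t) * (if j \<le> t then (-1)^(t-j) * real (t choose j) else 0))
    = (if m = j then 1 else 0)"
proof (cases "j \<le> m")
  case False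
  then show ?thesis by (intro trans[OF sum.neutral]) auto
next
  case True
  have "(\<Sum>t\<le>m. real (m choose t) * (if j \<le> t then (-1)^(t-j) * real (t choose j) else 0))
      = (\<Sum>t\<in>{j..m}. real (m choose t) * ((-1)^(t-j) * real (t choose j)))"
    by (rule sum.mono_neutral_cong_right) auto
  also have "\<dots> = (\<Sum>t\<in>{j..m}. real (m choose j) * ((-1)^(t-j) * real ((m-j) choose (t-j))))"
  proof (rule sum.cong[OF refl])
    fix t assume "t \<in> {j..m}"
    then have "(m choose t) * (t choose j) = (m choose j) * ((m-j) choose (t-j))"
      by (intro choose_mult) auto
    then have "real (m choose t) * real (t choose j) = real (m choose j) * real ((m-j) choose (t-j))"
      by (metis of_nat_mult)
    then show "real (m choose t) * ((-1)^(t-j) * real (t choose j)) = real (m choose j) * ((-1)^(t-j) * real ((m-j) choose (t-j)))"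
      by (metis mult.left_commute)
  qed
  also have "\<dots> = real (m choose j) * (\<Sum>t\<in>{j..m}. (-1)^(t-j) * real ((m-j) choose (t-j)))"
    by (simp add: sum_distrib_left)
  also have "(\<Sum>t\<in>{j..m}. (-1)^(t-j) * real ((m-j) choose (t-j))) = (\<Sum>i\<in>{0..m-j}. (-1)^i * real ((m-j) choose i))"
  proof -
    have "{j..m} = {0+j..(m-j)+j}" using True by simp
    then show ?thesis by (simp only: sum.shift_bounds_cl_nat_ivl) simp
  qed
  also have "\<dots> = (if m = j then 1 else 0)"
  proof (cases "m = j")
    case False
    then have "m - j > 0" using True by simp
    from choose_alternating_sum[OF this, where 'a=real] show ?thesis using False
      by (simp add: atLeast0AtMost)
  qed simp
  finally show ?thesis using True by simp
qed

definition gg :: "nat \<Rightarrow> nat \<Rightarrow> real" where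
  "gg k t = (if k \<le> t then (-1)^(t-k) * real ((t-1) choose (t-k)) else 0)"

lemma F_lem:
  assumes "1 \<le> k"
  shows "(\<Sum>t\<le>m. real (m choose t) * gg k t) = (if k \<le> m then 1 else 0)"
proof (induction m)
  case 0
  then show ?case using assms by (simp add: gg_def)
next
  case (Suc m)
  have g0: "gg k 0 = 0" using assms by (simp add: gg_def)
  have gS: "gg k (Suc t) = (if k - 1 \<le> t then (-1)^(t-(k-1)) * real (t choose (k-1)) else 0)" for t
  proof (cases "k \<le> Suc t")
    case True
    then have "t choose (Suc t - k) = t choose (k-1)"
      using binomial_symmetric[of "k-1" t] assms by (simp add: Suc_diff_le)
    then show ?thesis using True assms by (simp add: gg_def Suc_diff_le)
  qed (use assms in \<open>auto simp: gg_def\<close>)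
  have "(\<Sum>t\<le>Suc m. real (Suc m choose t) * gg k t)
      = (\<Sum>t\<le>m. real (Suc m choose Suc t) * gg k (Suc t))"
    by (subst sum.atMost_Suc_shift) (simp add: g0 del: sum.atMost_Suc)
  also have "\<dots> = (\<Sum>t\<le>m. real (m choose t) * gg k (Suc t)) + (\<Sum>t\<le>m. real (m choose Suc t) * gg k (Suc t))"
    by (simp add: sum.distrib distrib_right)
  also have "(\<Sum>t\<le>m. real (m choose Suc t) * gg k (Suc t)) = (\<Sum>t\<le>Suc m. real (m choose t) * gg k t)"
    by (subst sum.atMost_Suc_shift) (simp add: g0 del: sum.atMost_Suc)
  also have "\<dots> = (\<Sum>t\<le>m. real (m choose t) * gg k t)"
    by simp
  also have "(\<Sum>t\<le>m. real (m choose t) * gg k (Suc t)) = (if m = k - 1 then 1 else 0)"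
    unfolding gS by (rule H_lem)
  finally show ?case using Suc.IH assms by auto
qed


lemma pow_card_sum:
  assumes "finite D"
  shows "(\<Sum>T\<in>Pow D. gg k (card T)) = (\<Sum>t\<le>card D. real (card D choose t) * gg k t)"
proof -
  have "(\<Sum>T\<in>Pow D. gg k (card T)) = (\<Sum>t\<le>card D. \<Sum>T\<in>{T. T \<in> Pow D \<and> card T = t}. gg k (card T))"
    by (rule sum.group[symmetric]) (use assms card_mono in \<open>auto\<close>)
  also have "\<dots> = (\<Sum>t\<le>card D. real (card D choose t) * gg k t)"
  proof (rule sum.cong[OF refl])
    fix t
    have "(\<Sum>T\<in>{T. T \<in> Pow D \<and> card T = t}. gg k (card T)) = (\<Sum>T\<in>{T. T \<subseteq> D \<and> card T = t}. gg k t)"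
      by (rule sum.cong) auto
    also have "\<dots> = real (card D choose t) * gg k t"
      using n_subsets[OF assms, of t] by simp
    finally show "(\<Sum>T\<in>{T. T \<in> Pow D \<and> card T = t}. gg k (card T)) = real (card D choose t) * gg k t" .
  qed
  finally show ?thesis .
qed

lemma weight:
  assumes fin: "finite N" and CN: "C \<subseteq> N" and k1: "1 \<le> k" and aN: "a \<in> N" and B: "B \<subseteq> N - {a}"
  shows "(\<Sum>S\<in>calS N. if a \<in> S \<and> S - {a} \<subseteq> B then tau C k S else 0)
       = (if a \<in> C \<and> k \<le> card (B \<inter> C) then 1 else 0)"
proof (cases "a \<in> C")
  case False
  have "tau C k S = 0" if "a \<in> S" for S using that False unfolding tau_def by auto
  then show ?thesis using False by (auto intro: sum.neutral)
next
  case True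
  define D where "D = B \<inter> C"
  have finD: "finite D" using fin B unfolding D_def by (meson Diff_subset finite_subset inf.coboundedI1)
  have aD: "a \<notin> D" using B unfolding D_def by auto
  have DN: "D \<subseteq> N" using B unfolding D_def by auto
  have "(\<Sum>S\<in>calS N. if a \<in> S \<and> S - {a} \<subseteq> B then tau C k S else 0)
      = (\<Sum>S\<in>Pow N. if a \<in> S \<and> S - {a} \<subseteq> B \<and> card S \<ge> 2 then tau C k S else 0)"
    by (rule sum.mono_neutral_cong_left) (use fin in \<open>auto simp: calS_def\<close>)
  also have "\<dots> = (\<Sum>S\<in>Pow N. if S \<in> insert a ` Pow D then tau C k S else 0)"
  proof (rule sum.cong[OF refl])
    fix S assume SN: "S \<in> Pow N"
    show "(if a \<in> S \<and> S - {a} \<subseteq> B \<and> card S \<ge> 2 then tau C k S else 0)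
        = (if S \<in> insert a ` Pow D then tau C k S else 0)"
    proof (cases "tau C k S = 0")
      case False
      then have SC: "S \<subseteq> C" and cS: "card S \<ge> k + 1" unfolding tau_def by (auto split: if_splits)
      have "(a \<in> S \<and> S - {a} \<subseteq> B \<and> card S \<ge> 2) = (S \<in> insert a ` Pow D)"
      proof
        assume h: "a \<in> S \<and> S - {a} \<subseteq> B \<and> 2 \<le> card S"
        then have "S = insert a (S - {a})" by auto
        moreover have "S - {a} \<in> Pow D" using h SC unfolding D_def by auto
        ultimately show "S \<in> insert a ` Pow D" by blast
      next
        assume "S \<in> insert a ` Pow D"
        then show "a \<in> S \<and> S - {a} \<subseteq> B \<and> 2 \<le> card S" using cS k1 unfolding D_def by auto
      qed
      then show ?thesis by simp
    qed simp
  qed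
  also have "\<dots> = (\<Sum>S\<in>insert a ` Pow D. tau C k S)"
    by (subst sum.inter_filter[symmetric]) (use fin aN DN in \<open>auto intro!: sum.cong\<close>)
  also have "\<dots> = (\<Sum>T\<in>Pow D. tau C k (insert a T))"
  proof (rule sum.reindex[unfolded comp_def])
    show "inj_on (insert a) (Pow D)"
      using aD by (auto simp: inj_on_def)
  qed
  also have "\<dots> = (\<Sum>T\<in>Pow D. gg k (card T))"
  proof (rule sum.cong[OF refl])
    fix T assume "T \<in> Pow D"
    then have TD: "T \<subseteq> D" by auto
    then have fT: "finite T" using finD finite_subset by blast
    have aT: "a \<notin> T" using TD aD by auto
    have c: "card (insert a T) = Suc (card T)" using fT aT by simp
    have sub: "insert a T \<subseteq> C" using TD True unfolding D_def by auto
    show "tau C k (insert a T) = gg k (card T)"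
      unfolding tau_def gg_def c using sub k1 by (auto simp: numeral_2_eq_2)
  qed
  also have "\<dots> = (\<Sum>t\<le>card D. real (card D choose t) * gg k t)"
    by (rule pow_card_sum[OF finD])
  also have "\<dots> = (if k \<le> card D then 1 else 0)" by (rule F_lem[OF k1])
  finally show ?thesis using True unfolding D_def by simp
qed


theorem lemma11:
  fixes N C :: "'a set" and k :: nat and \<eta> :: "'a \<Rightarrow> 'a set \<Rightarrow> real"
  assumes "finite N" and "C \<subseteq> N" and "card C \<ge> 2"
    and "1 \<le> k" and "k \<le> card C - 1"
  shows "(\<Sum>S\<in>calS N. tau C k S * c_eta N \<eta> S)
       = (\<Sum>a\<in>C. \<Sum>B\<in>{B. B \<subseteq> N - {a} \<and> card (B \<inter> C) \<ge> k}. \<eta> a B)"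
proof -
  note fin = assms(1)
  have finS: "finite (calS N)" using fin unfolding calS_def by auto
  have SN: "S \<subseteq> N" if "S \<in> calS N" for S using that unfolding calS_def by auto
  have inner: "c_eta N \<eta> S = (\<Sum>a\<in>N. \<Sum>B\<in>Pow (N - {a}). if a \<in> S \<and> S - {a} \<subseteq> B then \<eta> a B else 0)"
    if "S \<in> calS N" for S
  proof -
    have "c_eta N \<eta> S = (\<Sum>a\<in>S. \<Sum>B\<in>Pow (N - {a}). if S - {a} \<subseteq> B then \<eta> a B else 0)"
      unfolding c_eta_def
    proof (rule sum.cong[OF refl])
      fix a
      have e: "{B. S - {a} \<subseteq> B \<and> B \<subseteq> N - {a}} = {B \<in> Pow (N - {a}). S - {a} \<subseteq> B}" by auto
      show "(\<Sum>B\<in>{B. S - {a} \<subseteq> B \<and> B \<subseteq> N - {a}}. \<eta> a B) = (\<Sum>B\<in>Pow (N - {a}). if S - {a} \<subseteq> B then \<eta> a B else 0)"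
        unfolding e by (rule sum.inter_filter) (use fin in auto)
    qed
    also have "\<dots> = (\<Sum>a\<in>N. if a \<in> S then (\<Sum>B\<in>Pow (N - {a}). if S - {a} \<subseteq> B then \<eta> a B else 0) else 0)"
    proof -
      have e2: "{a \<in> N. a \<in> S} = S" using SN[OF that] by auto
      show ?thesis by (subst e2[symmetric], rule sum.inter_filter[OF fin])
    qed
    also have "\<dots> = (\<Sum>a\<in>N. \<Sum>B\<in>Pow (N - {a}). if a \<in> S \<and> S - {a} \<subseteq> B then \<eta> a B else 0)"
      by (rule sum.cong[OF refl]) auto
    finally show ?thesis .
  qed
  have "(\<Sum>S\<in>calS N. tau C k S * c_eta N \<eta> S)
      = (\<Sum>S\<in>calS N. \<Sum>a\<in>N. \<Sum>B\<in>Pow (N - {a}). \<eta> a B * (if a \<in> S \<and> S - {a} \<subseteq> B then tau C k S else 0))"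
    by (rule sum.cong[OF refl]) (simp add: inner sum_distrib_left, intro sum.cong refl, simp)
  also have "\<dots> = (\<Sum>a\<in>N. \<Sum>B\<in>Pow (N - {a}). \<Sum>S\<in>calS N. \<eta> a B * (if a \<in> S \<and> S - {a} \<subseteq> B then tau C k S else 0))"
    by (subst sum.swap) (rule sum.cong[OF refl], rule sum.swap)
  also have "\<dots> = (\<Sum>a\<in>N. \<Sum>B\<in>Pow (N - {a}). \<eta> a B * (if a \<in> C \<and> k \<le> card (B \<inter> C) then 1 else 0))"
    by (intro sum.cong refl) (simp add: sum_distrib_left[symmetric] weight[OF fin assms(2) assms(4)])
  also have "\<dots> = (\<Sum>a\<in>N. if a \<in> C then (\<Sum>B\<in>{B. B \<subseteq> N - {a} \<and> card (B \<inter> C) \<ge> k}. \<eta> a B) else 0)"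
  proof (rule sum.cong[OF refl])
    fix a
    have e: "{B. B \<subseteq> N - {a} \<and> card (B \<inter> C) \<ge> k} = {B \<in> Pow (N - {a}). k \<le> card (B \<inter> C)}" by auto
    show "(\<Sum>B\<in>Pow (N - {a}). \<eta> a B * (if a \<in> C \<and> k \<le> card (B \<inter> C) then 1 else 0))
      = (if a \<in> C then (\<Sum>B\<in>{B. B \<subseteq> N - {a} \<and> card (B \<inter> C) \<ge> k}. \<eta> a B) else 0)"
    proof (cases "a \<in> C")
      case True
      have "(\<Sum>B\<in>{B. B \<subseteq> N - {a} \<and> card (B \<inter> C) \<ge> k}. \<eta> a B)
          = (\<Sum>B\<in>Pow (N - {a}). if k \<le> card (B \<inter> C) then \<eta> a B else 0)"
        unfolding e by (rule sum.inter_filter) (use fin in simp)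
      moreover have "(\<Sum>B\<in>Pow (N - {a}). \<eta> a B * (if a \<in> C \<and> k \<le> card (B \<inter> C) then 1 else 0))
          = (\<Sum>B\<in>Pow (N - {a}). if k \<le> card (B \<inter> C) then \<eta> a B else 0)"
        by (rule sum.cong) (auto simp: True)
      ultimately show ?thesis using True by simp
    qed simp
  qed
  also have "\<dots> = (\<Sum>a\<in>C. \<Sum>B\<in>{B. B \<subseteq> N - {a} \<and> card (B \<inter> C) \<ge> k}. \<eta> a B)"
  proof -
    have e2: "{a \<in> N. a \<in> C} = C" using assms(2) by auto
    show ?thesis by (subst e2[symmetric], rule sum.inter_filter[OF fin, symmetric])
  qed
  finally show ?thesis .
qed

end
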